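(* Let $a<b$ be positive integers with $\gcd(a,b)=1$, let $\mathcal{E}$ be the equation $ax+by=z$, and let $n\ge R_2(\mathcal{E})$. Let $b^{-1}$ be any integer with $b^{-1}b\equiv 1\pmod a$ and $a^{-1}$ any integer with $a^{-1}a\equiv 1\pmod b$. Then $$M_{\mathcal{E}}(n)\le \sum_{z=a+b}^{\lfloor n/(a(a+b))\rfloor}\left(\frac{z}{ab}-\left\{\frac{b^{-1}z}{a}\right\}-\left\{\frac{a^{-1}z}{b}\right\}+1\right),$$ where $\{t\}=t-\lfloor t\rfloor$ denotes the fractional part.
   Context: For a positive integer $n$ write $[n]=\{1,\dots,n\}$. A $k$-coloring of $[n]$ is a map $\chi:[n]\to\{0,\dots,k-1\}$. A solution to a 3-variable equation $\mathcal{E}$ in $[n]$ is an ordered triple $(x,y,z)\in[n]^3$ satisfying $\mathcal{E}$; it is monochromatic under $\chi$ if $\chi(x)=\chi(y)=\chi(z)$. $\mu_\chi(\mathcal{E},n,k)$ is the number of monochromatic solutions under $\chi$, $M_{\mathcal{E}}(n,k)=\min_\chi \mu_\chi(\mathcal{E},n,k)$ over all $k$-colorings $\chi$ of $[n]$, and $M_{\mathcal{E}}(n)=M_{\mathcal{E}}(n,2)$. The 2-color Rado number $R_2(\mathcal{E})$ is the least integer $N$ such that every 2-coloring of $[N]$ has at least one monochromatic solution to $\mathcal{E}$. *)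

theory Defs
  imports Complex_Main
begin

definition lin_eq :: "nat \<Rightarrow> nat \<Rightarrow> nat \<times> nat \<times> nat \<Rightarrow> bool" where
  "lin_eq a b = (\<lambda>(x, y, z). a * x + b * y = z)"

definition is_coloring :: "nat \<Rightarrow> nat \<Rightarrow> (nat \<Rightarrow> nat) \<Rightarrow> bool" where
  "is_coloring n k \<chi> \<longleftrightarrow> (\<forall>x\<in>{1..n}. \<chi> x < k)"

definition mono_count :: "(nat \<times> nat \<times> nat \<Rightarrow> bool) \<Rightarrow> nat \<Rightarrow> (nat \<Rightarrow> nat) \<Rightarrow> nat" where
  "mono_count E n \<chi> = card {(x, y, z). x \<in> {1..n} \<and> y \<in> {1..n} \<and> z \<in> {1..n}
        \<and> E (x, y, z) \<and> \<chi> x = \<chi> y \<and> \<chi> y = \<chi> z}"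

definition M_k :: "(nat \<times> nat \<times> nat \<Rightarrow> bool) \<Rightarrow> nat \<Rightarrow> nat \<Rightarrow> nat" where
  "M_k E n k = Min {mono_count E n \<chi> | \<chi>. is_coloring n k \<chi>}"

definition M2 :: "(nat \<times> nat \<times> nat \<Rightarrow> bool) \<Rightarrow> nat \<Rightarrow> nat" where
  "M2 E n = M_k E n 2"

definition rado2 :: "(nat \<times> nat \<times> nat \<Rightarrow> bool) \<Rightarrow> nat" where
  "rado2 E = (LEAST N. \<forall>\<chi>. is_coloring N 2 \<chi> \<longrightarrow> mono_count E N \<chi> \<ge> 1)"

end

theory Submission
  imports Defs "HOL-Number_Theory.Cong"
begin

lemma frac_div_int:
  fixes k :: int and a :: nat
  assumes "0 < a"
  shows "frac (real_of_int k / real a) = real_of_int (k mod int a) / real a"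
proof -
  have e: "real_of_int k / real a - real_of_int (k mod int a) / real a = real_of_int (k div int a)"
  proof -
    have "k = int a * (k div int a) + k mod int a" by simp
    hence "real_of_int k = real a * real_of_int (k div int a) + real_of_int (k mod int a)"
      by (metis of_int_add of_int_mult of_int_of_nat_eq)
    thus ?thesis using assms by (simp add: field_simps)
  qed
  have "0 \<le> k mod int a" "k mod int a < int a" using assms by auto
  hence "0 \<le> real_of_int (k mod int a)" "real_of_int (k mod int a) < real a" by linarith+
  thus ?thesis unfolding frac_unique_iff using e assms by (simp add: field_simps)
qed

lemma fiber_bound:
  fixes a b z :: nat and binv ainv :: int
  assumes a0: "0 < a" and b0: "0 < b" and cop: "coprime a b"
    and hb: "(binv * int b) mod int a = 1 mod int a"
    and ha: "(ainv * int a) mod int b = 1 mod int b"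
  shows "real (card {(x, y). x \<ge> 1 \<and> y \<ge> 1 \<and> a * x + b * y = z}) \<le>
     real z / real (a * b) - frac (real_of_int (binv * int z) / real a)
         - frac (real_of_int (ainv * int z) / real b) + 1"
proof -
  define x0 where "x0 = (ainv * int z) mod int b"
  define y0 where "y0 = (binv * int z) mod int a"
  define D where "D = int z - int a * x0 - int b * y0"
  have x0r: "0 \<le> x0" "x0 < int b" using b0 by (auto simp: x0_def)
  have y0r: "0 \<le> y0" "y0 < int a" using a0 by (auto simp: y0_def)
  have hb': "[binv * int b = 1] (mod int a)" using hb by (simp add: cong_def)
  have ha': "[ainv * int a = 1] (mod int b)" using ha by (simp add: cong_def)
  have da: "int a dvd D"
  proof -
    have "[int b * y0 = int b * (binv * int z)] (mod int a)"
      unfolding y0_def by (simp add: cong_def mod_mult_right_eq)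
    moreover have "[int b * (binv * int z) = (binv * int b) * int z] (mod int a)"
      by (simp add: ac_simps)
    moreover have "[(binv * int b) * int z = 1 * int z] (mod int a)"
      using hb' cong_mult cong_refl by blast
    ultimately have "[int b * y0 = int z] (mod int a)" by (metis cong_trans mult_1)
    hence "int a dvd int z - int b * y0" by (metis cong_iff_dvd_diff cong_sym)
    moreover have "D = (int z - int b * y0) - int a * x0" by (simp add: D_def)
    ultimately show ?thesis by (simp add: dvd_diff)
  qed
  have db: "int b dvd D"
  proof -
    have "[int a * x0 = int a * (ainv * int z)] (mod int b)"
      unfolding x0_def by (simp add: cong_def mod_mult_right_eq)
    moreover have "[int a * (ainv * int z) = (ainv * int a) * int z] (mod int b)"
      by (simp add: ac_simps)
    moreover have "[(ainv * int a) * int z = 1 * int z] (mod int b)"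
      using ha' cong_mult cong_refl by blast
    ultimately have "[int a * x0 = int z] (mod int b)" by (metis cong_trans mult_1)
    hence "int b dvd int z - int a * x0" by (metis cong_iff_dvd_diff cong_sym)
    moreover have "D = (int z - int a * x0) - int b * y0" by (simp add: D_def)
    ultimately show ?thesis by (simp add: dvd_diff)
  qed
  have "coprime (int a) (int b)" using cop by simp
  hence dab: "int a * int b dvd D" using da db by (simp add: divides_mult)
  then obtain q where q: "D = int a * int b * q" by blast
  have abpos: "0 < int a * int b" using a0 b0 by simp
  have "D > - 2 * (int a * int b)"
  proof -
    have "int a * x0 < int a * int b" using x0r a0 by simp
    moreover have "int b * y0 < int b * int a" using y0r b0 by simp
    ultimately show ?thesis unfolding D_def by (simp add: algebra_simps)
  qed
  hence "int a * int b * q > int a * int b * (-2)" using q by simp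
  hence "-2 < q" using abpos mult_less_cancel_left_pos by blast
  hence qge: "q \<ge> -1" by linarith
  define S where "S = {(x, y). x \<ge> 1 \<and> y \<ge> 1 \<and> a * x + b * y = z}"
  define g where "g = (\<lambda>(x::nat, y::nat). int x div int b)"
  have mem: "g p \<in> {0..q}" if pS: "p \<in> S" for p
  proof -
    obtain x y where p: "p = (x, y)" "x \<ge> 1" "y \<ge> 1" "a * x + b * y = z"
      using pS unfolding S_def by (cases p) auto
    have eqz: "int a * int x + int b * int y = int z" using p(4) by (metis of_nat_add of_nat_mult)
    have "int x mod int b = x0"
    proof -
      have "[ainv * int z = ainv * (int a * int x) + ainv * int b * int y] (mod int b)"
        unfolding eqz[symmetric] by (simp add: cong_def algebra_simps)
      moreover have "[ainv * (int a * int x) + ainv * int b * int y = (ainv * int a) * int x] (mod int b)"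
        by (simp add: cong_def mult.assoc mult.left_commute[of ainv "int b"])
      moreover have "[(ainv * int a) * int x = 1 * int x] (mod int b)"
        using ha' cong_mult cong_refl by blast
      ultimately have "[ainv * int z = int x] (mod int b)" by (metis cong_trans mult_1)
      thus ?thesis unfolding x0_def cong_def by simp
    qed
    hence xs: "int x = x0 + int b * (int x div int b)" by (metis add.commute mult_div_mod_eq)
    have "int y mod int a = y0"
    proof -
      have "[binv * int z = binv * (int b * int y) + binv * int a * int x] (mod int a)"
        unfolding eqz[symmetric] by (simp add: cong_def algebra_simps)
      moreover have "[binv * (int b * int y) + binv * int a * int x = (binv * int b) * int y] (mod int a)"
        by (simp add: cong_def mult.assoc mult.left_commute[of binv "int a"])
      moreover have "[(binv * int b) * int y = 1 * int y] (mod int a)"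
        using hb' cong_mult cong_refl by blast
      ultimately have "[binv * int z = int y] (mod int a)" by (metis cong_trans mult_1)
      thus ?thesis unfolding y0_def cong_def by simp
    qed
    hence ys: "int y = y0 + int a * (int y div int a)" by (metis add.commute mult_div_mod_eq)
    have s0: "int x div int b \<ge> 0" "int y div int a \<ge> 0" by (simp_all add: pos_imp_zdiv_nonneg_iff a0 b0)
    have "D = int a * int b * (int x div int b + int y div int a)"
    proof -
      have "D = int a * (int x - x0) + int b * (int y - y0)" unfolding D_def using eqz by (simp add: algebra_simps)
      also have "\<dots> = int a * (int b * (int x div int b)) + int b * (int a * (int y div int a))"
        using xs ys by (metis add_diff_cancel_left')
      finally show ?thesis by (simp add: algebra_simps)
    qed
    hence "q = int x div int b + int y div int a" using q abpos a0 b0 by simp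
    thus ?thesis using s0 p unfolding g_def by simp
  qed
  have inj: "inj_on g S"
  proof
    fix p1 p2 assume p1: "p1 \<in> S" and p2: "p2 \<in> S" and e: "g p1 = g p2"
    obtain x1 y1 where P1: "p1 = (x1, y1)" "a * x1 + b * y1 = z" using p1 unfolding S_def by (cases p1) auto
    obtain x2 y2 where P2: "p2 = (x2, y2)" "a * x2 + b * y2 = z" using p2 unfolding S_def by (cases p2) auto
    have m1: "int x1 mod int b = x0" and m2: "int x2 mod int b = x0"
    proof -
      have gen: "int x mod int b = x0" if "a * x + b * y = z" for x y
      proof -
        have eqz: "int a * int x + int b * int y = int z" using that by (metis of_nat_add of_nat_mult)
        have "[ainv * int z = ainv * (int a * int x) + ainv * int b * int y] (mod int b)"
          unfolding eqz[symmetric] by (simp add: cong_def algebra_simps)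
        moreover have "[ainv * (int a * int x) + ainv * int b * int y = (ainv * int a) * int x] (mod int b)"
          by (simp add: cong_def mult.assoc mult.left_commute[of ainv "int b"])
        moreover have "[(ainv * int a) * int x = 1 * int x] (mod int b)"
          using ha' cong_mult cong_refl by blast
        ultimately have "[ainv * int z = int x] (mod int b)" by (metis cong_trans mult_1)
        thus ?thesis unfolding x0_def cong_def by simp
      qed
      show "int x1 mod int b = x0" using gen P1 by blast
      show "int x2 mod int b = x0" using gen P2 by blast
    qed
    have "int x1 div int b = int x2 div int b" using e P1 P2 unfolding g_def by simp
    hence "int x1 = int x2" using m1 m2 by (metis mult_div_mod_eq)
    hence "x1 = x2" by simp
    hence "b * y1 = b * y2" using P1 P2 by (metis add_left_cancel)
    hence "y1 = y2" using b0 by simp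
    thus "p1 = p2" using P1 P2 \<open>x1 = x2\<close> by simp
  qed
  have "card S \<le> card {0..q}"
    using card_inj_on_le[OF inj] mem by blast
  hence "real (card S) \<le> real_of_int (q + 1)" using qge by simp
  also have "real_of_int (q + 1) = real z / real (a * b) - real_of_int y0 / real a - real_of_int x0 / real b + 1"
  proof -
    have "real_of_int D = real a * real b * real_of_int q" using q by simp
    moreover have "real_of_int D = real z - real a * real_of_int x0 - real b * real_of_int y0"
      unfolding D_def by simp
    ultimately show ?thesis using a0 b0 by (simp add: field_simps)
  qed
  finally show ?thesis unfolding S_def x0_def y0_def
    using frac_div_int[OF a0, of "binv * int z"] frac_div_int[OF b0, of "ainv * int z"] by simp
qed

theorem theorem4:
  fixes a b n :: nat and binv ainv :: int
  assumes "0 < a" "a < b" "coprime a b"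
    and "n \<ge> rado2 (lin_eq a b)"
    and "(binv * int b) mod int a = 1 mod int a"
    and "(ainv * int a) mod int b = 1 mod int b"
  shows "real (M2 (lin_eq a b) n) \<le>
    (\<Sum>z = a + b .. n div (a * (a + b)).
       real z / real (a * b) - frac (real_of_int (binv * int z) / real a)
         - frac (real_of_int (ainv * int z) / real b) + 1)"
proof -
  have a0: "0 < a" and b0: "0 < b" using assms by auto
  define m where "m = n div (a * (a + b))"
  define K where "K = (a + b) * (m + 1)"
  define chi where "chi = (\<lambda>x::nat. if x \<le> m \<or> K \<le> x then 0 else (1::nat))"
  have col: "is_coloring n 2 chi" by (simp add: is_coloring_def chi_def)
  have nlt: "n < a * K"
  proof -
    define d where "d = a * (a + b)"
    have d0: "0 < d" using a0 by (simp add: d_def)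
    have "n = d * m + n mod d" by (simp add: m_def d_def)
    moreover have "n mod d < d" using d0 by simp
    ultimately have "n < d * m + d" by linarith
    thus ?thesis by (simp add: K_def d_def algebra_simps)
  qed
  define F where "F z = {(x, y). x \<ge> 1 \<and> y \<ge> 1 \<and> a * x + b * y = z}" for z
  define T where "T = {(x, y, z). x \<in> {1..n} \<and> y \<in> {1..n} \<and> z \<in> {1..n}
        \<and> lin_eq a b (x, y, z) \<and> chi x = chi y \<and> chi y = chi z}"
  have key: "a + b \<le> z \<and> z \<le> m" if xn: "x \<in> {1..n}" and yn: "y \<in> {1..n}" and zn: "z \<in> {1..n}"
    and eq: "a * x + b * y = z" and c1: "chi x = chi y" and c2: "chi y = chi z" for x y z
  proof
    have "a * 1 \<le> a * x" using xn by (intro mult_le_mono2) auto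
    moreover have "b * 1 \<le> b * y" using yn by (intro mult_le_mono2) auto
    ultimately show "a + b \<le> z" using eq by linarith
  next
    have ch1: "chi w \<noteq> 0 \<longleftrightarrow> m < w \<and> w < K" for w by (simp add: chi_def)
    show "z \<le> m"
    proof (cases "chi z = 0")
      case False
      hence "chi x \<noteq> 0" "chi y \<noteq> 0" using c1 c2 by simp_all
      hence "m + 1 \<le> x" "m + 1 \<le> y" "z < K" using ch1 False by (metis Suc_eq_plus1 Suc_leI)+
      moreover have "a * (m + 1) \<le> a * x" "b * (m + 1) \<le> b * y" using calculation by (simp_all only: mult_le_mono2)
      ultimately have "K \<le> z" "z < K" using eq by (simp_all add: K_def algebra_simps)
      thus ?thesis by simp
    next
      case True
      hence cx: "chi x = 0" "chi y = 0" using c1 c2 by simp_all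
      show ?thesis
      proof (rule ccontr)
        assume "\<not> z \<le> m"
        hence zK: "K \<le> z" using True ch1 by (meson not_le)
        have zn': "z \<le> n" using zn by simp
        show False
        proof (cases "K \<le> x")
          case True
          hence "a * K \<le> a * x" by simp
          thus False using eq zn' nlt by linarith
        next
          case nx: False
          show False
          proof (cases "K \<le> y")
            case True
            hence "b * K \<le> b * y" by simp
            moreover have "a * K \<le> b * K" using assms by simp
            ultimately show False using eq zn' nlt by linarith
          next
            case False
            hence "x \<le> m" "y \<le> m" using nx cx ch1 by (meson not_le)+
            hence "a * x \<le> a * m" "b * y \<le> b * m" by simp_all
            hence "z \<le> (a + b) * m" unfolding distrib_right using eq by linarith
            moreover have "(a + b) * m < K" using a0 by (simp add: K_def algebra_simps)
            ultimately show False using zK by linarith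
          qed
        qed
      qed
    qed
  qed
  have sub: "T \<subseteq> (\<lambda>(z, (x, y)). (x, y, z)) ` (SIGMA z:{a + b..m}. F z)"
  proof
    fix t assume "t \<in> T"
    then obtain x y z where t: "t = (x, y, z)" "x \<in> {1..n}" "y \<in> {1..n}" "z \<in> {1..n}"
      "a * x + b * y = z" "chi x = chi y" "chi y = chi z"
      unfolding T_def lin_eq_def by auto
    have k: "a + b \<le> z \<and> z \<le> m" using key[OF t(2-7)] .
    have "(z, (x, y)) \<in> (SIGMA z:{a + b..m}. F z)" using k t by (auto simp: F_def)
    thus "t \<in> (\<lambda>(z, (x, y)). (x, y, z)) ` (SIGMA z:{a + b..m}. F z)"
      by (rule rev_image_eqI) (simp add: t(1))
  qed
  have finF: "finite (F z)" for z
  proof -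
    have "F z \<subseteq> {..z} \<times> {..z}"
    proof
      fix p assume "p \<in> F z"
      then obtain x y where p: "p = (x, y)" "a * x + b * y = z" unfolding F_def by auto
      have "x \<le> a * x" "y \<le> b * y" using a0 b0 by simp_all
      hence "x \<le> z" "y \<le> z" using p(2) by linarith+
      thus "p \<in> {..z} \<times> {..z}" using p(1) by simp
    qed
    thus ?thesis by (rule finite_subset) auto
  qed
  have "card T \<le> card ((\<lambda>(z, (x, y)). (x, y, z)) ` (SIGMA z:{a + b..m}. F z))"
    using sub finF by (intro card_mono) auto
  also have "\<dots> \<le> card (SIGMA z:{a + b..m}. F z)" by (rule card_image_le) (use finF in auto)
  also have "\<dots> = (\<Sum>z = a + b..m. card (F z))" using finF by (simp add: card_SigmaI)
  finally have cT: "card T \<le> (\<Sum>z = a + b..m. card (F z))" .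
  have finset: "finite {mono_count (lin_eq a b) n chi' | chi'. is_coloring n 2 chi'}"
  proof -
    have "{mono_count (lin_eq a b) n chi' | chi'. is_coloring n 2 chi'} \<subseteq> {..card ({1..n} \<times> {1..n} \<times> {1..n})}"
    proof
      fix v assume "v \<in> {mono_count (lin_eq a b) n chi' | chi'. is_coloring n 2 chi'}"
      then obtain chi' where v: "v = mono_count (lin_eq a b) n chi'" by auto
      have "v \<le> card ({1..n} \<times> {1..n} \<times> {1..n})" unfolding v mono_count_def
        by (intro card_mono) auto
      thus "v \<in> {..card ({1..n} \<times> {1..n} \<times> {1..n})}" by simp
    qed
    thus ?thesis by (rule finite_subset) simp
  qed
  have "M2 (lin_eq a b) n \<le> mono_count (lin_eq a b) n chi"
    unfolding M2_def M_k_def using col by (intro Min_le finset) auto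
  also have "mono_count (lin_eq a b) n chi = card T" unfolding mono_count_def T_def by simp
  finally have "M2 (lin_eq a b) n \<le> (\<Sum>z = a + b..m. card (F z))" using cT by linarith
  hence "real (M2 (lin_eq a b) n) \<le> (\<Sum>z = a + b..m. real (card (F z)))"
    by (metis of_nat_le_iff of_nat_sum)
  also have "\<dots> \<le> (\<Sum>z = a + b .. m.
       real z / real (a * b) - frac (real_of_int (binv * int z) / real a)
         - frac (real_of_int (ainv * int z) / real b) + 1)"
    by (intro sum_mono, unfold F_def, rule fiber_bound) (use assms b0 in auto)
  finally show ?thesis by (simp add: m_def)
qed

end
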